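(* Assume the observation space $\mathcal{X}$ is countable. Let $\hat\phi:\mathcal{X}\to[N]$ and $\hat g:[N]\times\mathcal{A}\times\mathcal{X}\to[0,1]$ satisfy \[ \mathbb{E}_{(x,a,x')\sim D}\bigl[\,|\hat g(\hat\phi(x),a,x')-g^{\star}(x,a,x')|\,\bigr]\le\Delta . \] Then \[ \Pr_{x_1,x_2\sim\mu\ \text{i.i.d.}}\bigl(\phi^{\star}(x_1)\ne\phi^{\star}(x_2)\ \wedge\ \hat\phi(x_1)=\hat\phi(x_2)\bigr)\ \le\ \frac{8|\mathcal{A}|^2\Delta}{\Gamma}. \]
   Context: Setting: a block MDP with finite action set $\mathcal{A}$, perfect decoder $\phi^{\star}:\mathcal{X}\to\mathcal{S}$ (emissions of distinct latent states have disjoint supports), first-step latent transition $T(\cdot\mid s,a)$, and initial latent state drawn from a distribution over a set $\mathcal{S}_1$ of $N$ initial states. Write $\mu(x)$ for the probability of the initial observation $x$, $T(x'\mid x,a)$ for the probability of the next observation $x'$ after action $a$ from initial observation $x$ (latent transition from $\phi^{\star}(x)$ times emission of $x'$), and $\rho(x')=\mathbb{E}_{x\sim\mu,a\sim\mathrm{Unif}(\mathcal{A})}[T(x'\mid x,a)]$. Define $D(x,a,x')=\frac{\mu(x)}{2|\mathcal{A}|}\{T(x'\mid x,a)+\rho(x')\}$ (a half-half mixture of real transitions and imposter transitions whose $x'$ is drawn independently) and $g^{\star}(x,a,x')=T(x'\mid x,a)/(T(x'\mid x,a)+\rho(x'))$. Margin assumption: for any two distinct initial states $s,\tilde s\in\mathcal{S}_1$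 and every $a\in\mathcal{A}$, $\|T(\cdot\mid s,a)-T(\cdot\mid\tilde s,a)\|_{\mathrm{TV}}\ge\Gamma$, with $\Gamma>0$. *)

theory Defs
  imports "HOL-Probability.Probability"
begin

text \<open>Latent states of type 's, observations of type 'x,
  actions of the finite type 'a. phi is the perfect decoder, q s is the emission
  distribution of latent state s, T s a the latent transition, p1 the initial latent
  distribution.\<close>

definition tv :: "'s pmf \<Rightarrow> 's pmf \<Rightarrow> real" where
  "tv p p' = (\<Sum>\<^sub>\<infinity>s. \<bar>pmf p s - pmf p' s\<bar>) / 2"

definition mu0 :: "('x \<Rightarrow> 's) \<Rightarrow> 's pmf \<Rightarrow> ('s \<Rightarrow> 'x pmf) \<Rightarrow> 'x \<Rightarrow> real" where
  "mu0 phi p1 q x = pmf p1 (phi x) * pmf (q (phi x)) x"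

definition Tobs :: "('x \<Rightarrow> 's) \<Rightarrow> ('s \<Rightarrow> 'a \<Rightarrow> 's pmf) \<Rightarrow> ('s \<Rightarrow> 'x pmf)
    \<Rightarrow> 'x \<Rightarrow> 'a \<Rightarrow> 'x \<Rightarrow> real" where
  "Tobs phi T q x a x' = pmf (T (phi x) a) (phi x') * pmf (q (phi x')) x'"

definition rho :: "('x \<Rightarrow> 's) \<Rightarrow> 's pmf \<Rightarrow> ('s \<Rightarrow> 'a::finite \<Rightarrow> 's pmf) \<Rightarrow> ('s \<Rightarrow> 'x pmf)
    \<Rightarrow> 'x \<Rightarrow> real" where
  "rho phi p1 T q x' =
     (\<Sum>\<^sub>\<infinity>x. \<Sum>a\<in>UNIV. mu0 phi p1 q x * Tobs phi T q x a x') / real (card (UNIV :: 'a set))"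

definition Dist :: "('x \<Rightarrow> 's) \<Rightarrow> 's pmf \<Rightarrow> ('s \<Rightarrow> 'a::finite \<Rightarrow> 's pmf) \<Rightarrow> ('s \<Rightarrow> 'x pmf)
    \<Rightarrow> 'x \<Rightarrow> 'a \<Rightarrow> 'x \<Rightarrow> real" where
  "Dist phi p1 T q x a x' =
     mu0 phi p1 q x / (2 * real (card (UNIV :: 'a set))) * (Tobs phi T q x a x' + rho phi p1 T q x')"

definition gstar :: "('x \<Rightarrow> 's) \<Rightarrow> 's pmf \<Rightarrow> ('s \<Rightarrow> 'a::finite \<Rightarrow> 's pmf) \<Rightarrow> ('s \<Rightarrow> 'x pmf)
    \<Rightarrow> 'x \<Rightarrow> 'a \<Rightarrow> 'x \<Rightarrow> real" where
  "gstar phi p1 T q x a x' =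
     Tobs phi T q x a x' / (Tobs phi T q x a x' + rho phi p1 T q x')"

end

theory Submission
  imports Defs
begin

lemma enn_summable[simp]: "(f::_ \<Rightarrow> ennreal) summable_on S"
  by (simp add: nonneg_summable_on_complete)

lemma enn_Sigma_fin:
  fixes f :: "_ \<Rightarrow> ennreal"
  assumes "finite G"
  shows "infsum f (Sigma G B) = (\<Sum>x\<in>G. infsum (\<lambda>y. f (x,y)) (B x))"
  using assms
proof (induction G rule: finite_induct)
  case empty thus ?case by simp
next
  case (insert x G)
  have e: "Sigma (insert x G) B = Pair x ` B x \<union> Sigma G B" by auto
  have d: "Pair x ` B x \<inter> Sigma G B = {}" using insert by auto
  have "infsum f (Sigma (insert x G) B) = infsum f (Pair x ` B x) + infsum f (Sigma G B)"
    unfolding e by (rule infsum_Un_disjoint) (use d in auto)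
  also have "infsum f (Pair x ` B x) = infsum (\<lambda>y. f (x,y)) (B x)"
    by (subst infsum_reindex) (auto simp: inj_on_def comp_def)
  finally show ?case using insert by simp
qed

lemma enn_Sigma:
  fixes f :: "_ \<Rightarrow> ennreal"
  shows "infsum f (Sigma A B) = infsum (\<lambda>x. infsum (\<lambda>y. f (x,y)) (B x)) A"
proof (rule antisym)
  have "infsum f (Sigma A B) = (SUP F\<in>{F. finite F \<and> F\<subseteq>Sigma A B}. sum f F)"
    by (rule nonneg_infsum_complete) simp
  also have "\<dots> \<le> infsum (\<lambda>x. infsum (\<lambda>y. f (x,y)) (B x)) A"
  proof (rule SUP_least)
    fix F assume F: "F \<in> {F. finite F \<and> F\<subseteq>Sigma A B}"
    define G where "G = fst ` F"
    have G: "finite G" "G \<subseteq> A" using F by (auto simp: G_def)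
    have FG: "F \<subseteq> Sigma G B" using F unfolding G_def by force
    have "sum f F = infsum f F" using F by simp
    also have "\<dots> \<le> infsum f (Sigma G B)"
      by (rule infsum_mono_neutral) (use FG in auto)
    also have "\<dots> = (\<Sum>x\<in>G. infsum (\<lambda>y. f (x,y)) (B x))" by (rule enn_Sigma_fin[OF G(1)])
    also have "\<dots> = infsum (\<lambda>x. infsum (\<lambda>y. f (x,y)) (B x)) G" using G by simp
    also have "\<dots> \<le> infsum (\<lambda>x. infsum (\<lambda>y. f (x,y)) (B x)) A"
      by (rule infsum_mono_neutral) (use G in auto)
    finally show "sum f F \<le> infsum (\<lambda>x. infsum (\<lambda>y. f (x,y)) (B x)) A" .
  qed
  finally show "infsum f (Sigma A B) \<le> infsum (\<lambda>x. infsum (\<lambda>y. f (x,y)) (B x)) A" .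
next
  have "infsum (\<lambda>x. infsum (\<lambda>y. f (x,y)) (B x)) A =
     (SUP G\<in>{G. finite G \<and> G\<subseteq>A}. (\<Sum>x\<in>G. infsum (\<lambda>y. f (x,y)) (B x)))"
    by (rule nonneg_infsum_complete) simp
  also have "\<dots> \<le> infsum f (Sigma A B)"
  proof (rule SUP_least)
    fix G assume G: "G \<in> {G. finite G \<and> G\<subseteq>A}"
    have "(\<Sum>x\<in>G. infsum (\<lambda>y. f (x,y)) (B x)) = infsum f (Sigma G B)"
      using enn_Sigma_fin[of G f B] G by simp
    also have "\<dots> \<le> infsum f (Sigma A B)"
      by (rule infsum_mono_neutral) (use G in auto)
    finally show "(\<Sum>x\<in>G. infsum (\<lambda>y. f (x,y)) (B x)) \<le> infsum f (Sigma A B)" .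
  qed
  finally show "infsum (\<lambda>x. infsum (\<lambda>y. f (x,y)) (B x)) A \<le> infsum f (Sigma A B)" .
qed

lemma enn_swap:
  fixes f :: "_ \<Rightarrow> _ \<Rightarrow> ennreal"
  shows "infsum (\<lambda>x. infsum (\<lambda>y. f x y) B) A = infsum (\<lambda>y. infsum (\<lambda>x. f x y) A) B"
proof -
  have "infsum (\<lambda>x. infsum (\<lambda>y. f x y) B) A = infsum (\<lambda>(x,y). f x y) (A \<times> B)"
    using enn_Sigma[of "\<lambda>(x,y). f x y" A "\<lambda>_. B"] by simp
  also have "\<dots> = infsum (\<lambda>(y,x). f x y) (B \<times> A)"
  proof -
    have "((\<lambda>(x,y). f x y) has_sum infsum (\<lambda>(x,y). f x y) (A\<times>B)) (A\<times>B)"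
      by (rule has_sum_infsum) simp
    hence "((\<lambda>(y,x). f x y) has_sum infsum (\<lambda>(x,y). f x y) (A\<times>B)) (B\<times>A)"
      by (subst (asm) has_sum_swap) simp
    thus ?thesis by (simp add: infsumI)
  qed
  also have "\<dots> = infsum (\<lambda>y. infsum (\<lambda>x. f x y) A) B"
    using enn_Sigma[of "\<lambda>(y,x). f x y" B "\<lambda>_. A"] by simp
  finally show ?thesis .
qed

lemma enn_cmult:
  fixes f :: "_ \<Rightarrow> ennreal"
  assumes "c < top"
  shows "infsum (\<lambda>x. c * f x) A = c * infsum f A"
proof -
  have "infsum ((\<lambda>y. c * y) \<circ> f) A = c * infsum f A"
  proof (rule infsum_comm_additive_general)
    show "isCont ((*) c) (infsum f A)"
      unfolding isCont_def using ennreal_tendsto_cmult[OF assms, of "\<lambda>x. x"] by simp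
  qed (auto simp: sum_distrib_left)
  thus ?thesis by (simp add: comp_def)
qed

lemma enn_add:
  fixes f g :: "_ \<Rightarrow> ennreal"
  shows "infsum (\<lambda>x. f x + g x) A = infsum f A + infsum g A"
  by (rule infsum_add) auto

lemma enn_mono:
  fixes f g :: "_ \<Rightarrow> ennreal"
  assumes "\<And>x. x \<in> A \<Longrightarrow> f x \<le> g x"
  shows "infsum f A \<le> infsum g A"
  by (rule infsum_mono) (auto simp: assms)

lemma enn_sum:
  fixes f :: "_ \<Rightarrow> _ \<Rightarrow> ennreal"
  assumes "finite F"
  shows "infsum (\<lambda>x. \<Sum>a\<in>F. f x a) A = (\<Sum>a\<in>F. infsum (\<lambda>x. f x a) A)"
  using assms by (induction F rule: finite_induct) (auto simp: enn_add)

lemma real_enn: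
  fixes f :: "_ \<Rightarrow> real"
  assumes "\<And>x. x \<in> A \<Longrightarrow> f x \<ge> 0" "f summable_on A"
  shows "ennreal (infsum f A) = infsum (\<lambda>x. ennreal (f x)) A"
proof -
  have "infsum (ennreal \<circ> f) A = ennreal (infsum f A)"
    by (rule infsum_comm_additive_general) (use assms in \<open>auto simp: sum_ennreal subset_iff\<close>)
  thus ?thesis by (simp add: comp_def)
qed

lemma enn_fin_summable:
  fixes f :: "_ \<Rightarrow> real"
  assumes "\<And>x. x \<in> A \<Longrightarrow> f x \<ge> 0" "infsum (\<lambda>x. ennreal (f x)) A < top"
  shows "f summable_on A"
proof (rule nonneg_bdd_above_summable_on)
  show "bdd_above (sum f ` {F. F \<subseteq> A \<and> finite F})"
  proof (rule bdd_aboveI)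
    fix y assume "y \<in> sum f ` {F. F \<subseteq> A \<and> finite F}"
    then obtain F where F: "F \<subseteq> A" "finite F" "y = sum f F" by auto
    have "ennreal (sum f F) = (\<Sum>x\<in>F. ennreal (f x))"
      using F assms(1) by (auto intro!: sum_ennreal[symmetric])
    also have "\<dots> = infsum (\<lambda>x. ennreal (f x)) F" using F by simp
    also have "\<dots> \<le> infsum (\<lambda>x. ennreal (f x)) A"
      by (rule infsum_mono_neutral) (use F in auto)
    finally have "ennreal y \<le> infsum (\<lambda>x. ennreal (f x)) A" using F by simp
    thus "y \<le> enn2real (infsum (\<lambda>x. ennreal (f x)) A)"
      using assms(2) by (metis enn2real_ennreal enn2real_mono ennreal_0 ennreal_le_iff2
         linorder_not_le order_less_le top.not_eq_extremum le_zero_eq)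
  qed
qed (use assms in auto)

lemma real_le_enn:
  fixes f :: "_ \<Rightarrow> real"
  assumes "\<And>x. x \<in> A \<Longrightarrow> f x \<ge> 0"
  shows "ennreal (infsum f A) \<le> infsum (\<lambda>x. ennreal (f x)) A"
proof (cases "f summable_on A")
  case True thus ?thesis using real_enn[OF assms True] by simp
next
  case False thus ?thesis by (simp add: infsum_not_exists)
qed

lemma pmf_summable: "pmf p summable_on A"
proof -
  have "Infinite_Sum.abs_summable_on (pmf p) A"
    using abs_summable_equivalent pmf_abs_summable by blast
  thus ?thesis by (simp add: abs_summable_summable)
qed

lemma pmf_infsum: "infsum (pmf p) UNIV = 1"
  using infsetsum_infsum[OF pmf_abs_summable, of p UNIV] infsetsum_pmf_eq_1[of p UNIV] by simp

lemma pmf_enn: "infsum (\<lambda>x. ennreal (pmf p x)) UNIV = 1"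
  using real_enn[of UNIV "pmf p", OF _ pmf_summable] pmf_infsum[of p] by simp

lemma enn_triple:
  fixes f :: "'x \<times> 'a::finite \<times> 'y \<Rightarrow> ennreal"
  shows "infsum f UNIV = (\<Sum>\<^sub>\<infinity>x. \<Sum>a\<in>UNIV. \<Sum>\<^sub>\<infinity>y. f (x,a,y))"
proof -
  have "infsum f UNIV = infsum f (Sigma UNIV (\<lambda>_. UNIV))" by simp
  also have "\<dots> = (\<Sum>\<^sub>\<infinity>x. infsum (\<lambda>p. f (x,p)) (Sigma UNIV (\<lambda>_. UNIV)))"
    by (subst enn_Sigma) simp
  also have "\<dots> = (\<Sum>\<^sub>\<infinity>x. \<Sum>\<^sub>\<infinity>a. \<Sum>\<^sub>\<infinity>y. f (x,a,y))"
    by (subst enn_Sigma) simp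
  finally show ?thesis by simp
qed

lemma key_real:
  fixes m1 m2 t1 t2 r A h :: real
  assumes nn: "m1 \<ge> 0" "m2 \<ge> 0" "t1 \<ge> 0" "t2 \<ge> 0" "r \<ge> 0"
    and l1: "m1 * t1 \<le> A * r" and l2: "m2 * t2 \<le> A * r"
  shows "m1 * m2 * \<bar>t1 - t2\<bar> \<le> m1 * (t1 + r) * \<bar>h - t1 / (t1 + r)\<bar> * (m2 * (t2 + r) / r)
           + m2 * (t2 + r) * \<bar>h - t2 / (t2 + r)\<bar> * (m1 * (t1 + r) / r)"
proof (cases "r = 0")
  case True
  have "m1 * t1 = 0" using l1 True mult_nonneg_nonneg[OF nn(1) nn(3)] by simp
  moreover have "m2 * t2 = 0" using l2 True mult_nonneg_nonneg[OF nn(2) nn(4)] by simp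
  ultimately have "m1 * m2 * \<bar>t1 - t2\<bar> = 0" by auto
  moreover have "m1 * (t1 + r) * \<bar>h - t1 / (t1 + r)\<bar> * (m2 * (t2 + r) / r)
           + m2 * (t2 + r) * \<bar>h - t2 / (t2 + r)\<bar> * (m1 * (t1 + r) / r) = 0" using True by simp
  ultimately show ?thesis by linarith
next
  case False
  hence r: "r > 0" using nn by simp
  define g1 where "g1 = t1 / (t1 + r)"
  define g2 where "g2 = t2 / (t2 + r)"
  have eq: "t1 - t2 = (t1 + r) * (t2 + r) * (g1 - g2) / r"
  proof -
    have a: "t1 + r > 0" "t2 + r > 0" using r nn by auto
    have b1: "(t1 + r) * g1 = t1" unfolding g1_def using a by simp
    have b2: "(t2 + r) * g2 = t2" unfolding g2_def using a by simp
    have "(t1 + r) * (t2 + r) * (g1 - g2) = (t2 + r) * ((t1 + r) * g1) - (t1 + r) * ((t2 + r) * g2)"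
      by (simp add: algebra_simps)
    also have "\<dots> = t1 * (t2 + r) - t2 * (t1 + r)" unfolding b1 b2 by (simp add: algebra_simps)
    also have "\<dots> = r * (t1 - t2)" by (simp add: algebra_simps)
    finally show ?thesis using r by simp
  qed
  have tri: "\<bar>g1 - g2\<bar> \<le> \<bar>h - g1\<bar> + \<bar>h - g2\<bar>" by simp
  have P: "m1 * m2 * (t1 + r) * (t2 + r) / r \<ge> 0" using nn r by simp
  have "m1 * m2 * \<bar>t1 - t2\<bar> = (m1 * m2 * (t1 + r) * (t2 + r) / r) * \<bar>g1 - g2\<bar>"
    unfolding eq using nn r by (simp add: abs_mult abs_divide)
  also have "\<dots> \<le> (m1 * m2 * (t1 + r) * (t2 + r) / r) * (\<bar>h - g1\<bar> + \<bar>h - g2\<bar>)"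
    by (rule mult_left_mono[OF tri P])
  also have "\<dots> = m1 * (t1 + r) * \<bar>h - g1\<bar> * (m2 * (t2 + r) / r)
           + m2 * (t2 + r) * \<bar>h - g2\<bar> * (m1 * (t1 + r) / r)"
    by (simp add: algebra_simps add_divide_distrib[symmetric])
  finally show ?thesis unfolding g1_def g2_def .
qed



locale bmdp =
  fixes phi :: "'x \<Rightarrow> 's" and q :: "'s \<Rightarrow> 'x pmf" and T :: "'s \<Rightarrow> 'a::finite \<Rightarrow> 's pmf"
    and p1 :: "'s pmf"
  assumes decoder: "\<And>s x. x \<in> set_pmf (q s) \<Longrightarrow> phi x = s"
begin

lemma q_supp: "pmf (q s) x = (if s = phi x then pmf (q (phi x)) x else 0)"
  using decoder[of x s] by (auto simp: set_pmf_iff)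

lemma q_zero: "s \<noteq> phi x \<Longrightarrow> pmf (q s) x = 0"
  using decoder[of x s] by (auto simp: set_pmf_iff)

lemma bind_q: "pmf (bind_pmf P q) x = pmf P (phi x) * pmf (q (phi x)) x"
proof -
  have "pmf (bind_pmf P q) x = measure_pmf.expectation P (\<lambda>s. pmf (q s) x)"
    by (rule pmf_bind)
  also have "(\<lambda>s. pmf (q s) x) = (\<lambda>s. indicator {phi x} s * pmf (q (phi x)) x)"
    by (rule ext, subst q_supp) (auto simp: indicator_def)
  also have "measure_pmf.expectation P \<dots> = measure_pmf.prob P {phi x} * pmf (q (phi x)) x"
    by simp
  finally show ?thesis by (simp add: measure_pmf_single)
qed

lemma mu_pmf: "mu0 phi p1 q x = pmf (bind_pmf p1 q) x"
  by (simp add: bind_q mu0_def)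

lemma Tobs_pmf: "Tobs phi T q x a x' = pmf (bind_pmf (T (phi x) a) q) x'"
  by (simp add: bind_q Tobs_def)

lemma mu_nn: "mu0 phi p1 q x \<ge> 0" by (simp add: mu_pmf)
lemma Tobs_nn: "Tobs phi T q x a x' \<ge> 0" by (simp add: Tobs_pmf)
lemma Tobs_le1: "Tobs phi T q x a x' \<le> 1" by (simp add: Tobs_pmf pmf_le_1)

lemma mu_enn: "(\<Sum>\<^sub>\<infinity>x. ennreal (mu0 phi p1 q x)) = 1"
  by (simp add: mu_pmf pmf_enn)
lemma mu_summable: "mu0 phi p1 q summable_on A"
  by (simp add: mu_pmf[abs_def] pmf_summable)

lemma Tobs_enn: "(\<Sum>\<^sub>\<infinity>x'. ennreal (Tobs phi T q x a x')) = 1"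
  by (simp add: Tobs_pmf pmf_enn)

definition G :: "'x \<Rightarrow> 'x \<Rightarrow> real" where
  "G x' x = (\<Sum>a\<in>UNIV. mu0 phi p1 q x * Tobs phi T q x a x')"

lemma G_nn: "G x' x \<ge> 0" by (auto simp: G_def intro!: sum_nonneg mult_nonneg_nonneg mu_nn Tobs_nn)

lemma G_summable: "G x' summable_on A"
proof (rule summable_on_comparison_test)
  show "(\<lambda>x. real CARD('a) * mu0 phi p1 q x) summable_on A"
    by (intro summable_on_cmult_right mu_summable)
  fix x
  have "G x' x \<le> (\<Sum>a\<in>(UNIV::'a set). mu0 phi p1 q x)"
    unfolding G_def by (intro sum_mono) (simp add: mu_nn Tobs_le1 mult_left_le)
  thus "G x' x \<le> real CARD('a) * mu0 phi p1 q x" by simp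
qed (rule G_nn)

lemma rho_G: "real CARD('a) * rho phi p1 T q x' = infsum (G x') UNIV"
  by (simp add: rho_def G_def[abs_def])

lemma rho_nn: "rho phi p1 T q x' \<ge> 0"
  unfolding rho_def by (intro divide_nonneg_nonneg infsum_nonneg) (auto intro: G_nn[unfolded G_def])

lemma rho_low: "mu0 phi p1 q x0 * Tobs phi T q x0 a x' \<le> real CARD('a) * rho phi p1 T q x'"
proof -
  have "mu0 phi p1 q x0 * Tobs phi T q x0 a x' \<le> G x' x0"
    unfolding G_def by (rule member_le_sum) (auto intro: mult_nonneg_nonneg mu_nn Tobs_nn)
  also have "\<dots> = infsum (G x') {x0}" by simp
  also have "\<dots> \<le> infsum (G x') UNIV"
    by (rule infsum_mono_neutral) (auto simp: G_summable G_nn)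
  finally show ?thesis by (simp add: rho_G)
qed

lemma rho_enn: "ennreal (real CARD('a) * rho phi p1 T q x') = (\<Sum>\<^sub>\<infinity>x. ennreal (G x' x))"
  by (simp add: rho_G real_enn G_nn G_summable)

lemma G_enn: "ennreal (G x' x) = (\<Sum>a\<in>UNIV. ennreal (mu0 phi p1 q x) * ennreal (Tobs phi T q x a x'))"
  unfolding G_def by (subst sum_ennreal[symmetric]) (auto simp: mu_nn Tobs_nn ennreal_mult intro!: mult_nonneg_nonneg)

lemma G_sum_x': "(\<Sum>\<^sub>\<infinity>x'. ennreal (G x' x)) = ennreal (real CARD('a) * mu0 phi p1 q x)"
proof -
  have "(\<Sum>\<^sub>\<infinity>x'. ennreal (G x' x)) = (\<Sum>a\<in>UNIV. (\<Sum>\<^sub>\<infinity>x'. ennreal (mu0 phi p1 q x) * ennreal (Tobs phi T q x a x')))"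
    by (simp add: G_enn enn_sum)
  also have "\<dots> = (\<Sum>a\<in>(UNIV::'a set). ennreal (mu0 phi p1 q x))"
    by (simp add: enn_cmult Tobs_enn)
  also have "\<dots> = ennreal (real CARD('a) * mu0 phi p1 q x)"
    by (simp add: ennreal_mult mu_nn ennreal_of_nat_eq_real_of_nat)
  finally show ?thesis .
qed

lemma rho_sum: "(\<Sum>\<^sub>\<infinity>x'. ennreal (rho phi p1 T q x')) = 1"
proof -
  define A where "A = real CARD('a)"
  have A: "A > 0" by (simp add: A_def)
  have "\<And>x'. ennreal (rho phi p1 T q x') = ennreal (1/A) * (\<Sum>\<^sub>\<infinity>x. ennreal (G x' x))"
    using A by (simp add: rho_enn[symmetric, folded A_def] ennreal_mult[symmetric] rho_nn)
  hence "(\<Sum>\<^sub>\<infinity>x'. ennreal (rho phi p1 T q x')) = ennreal (1/A) * (\<Sum>\<^sub>\<infinity>x'. \<Sum>\<^sub>\<infinity>x. ennreal (G x' x))"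
    by (simp add: enn_cmult)
  also have "(\<Sum>\<^sub>\<infinity>x'. \<Sum>\<^sub>\<infinity>x. ennreal (G x' x)) = (\<Sum>\<^sub>\<infinity>x. \<Sum>\<^sub>\<infinity>x'. ennreal (G x' x))"
    by (rule enn_swap)
  also have "\<dots> = (\<Sum>\<^sub>\<infinity>x. ennreal A * ennreal (mu0 phi p1 q x))"
    by (simp add: G_sum_x' A_def ennreal_mult mu_nn)
  also have "\<dots> = ennreal A" by (simp add: enn_cmult mu_enn)
  finally show ?thesis using A by (simp add: ennreal_mult[symmetric])
qed

lemma c_sum:
  "(\<Sum>\<^sub>\<infinity>x2. ennreal (mu0 phi p1 q x2 * (Tobs phi T q x2 a x' + rho phi p1 T q x') / rho phi p1 T q x'))
     \<le> ennreal (real CARD('a) + 1)"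
proof (cases "rho phi p1 T q x' = 0")
  case True thus ?thesis by simp
next
  case False
  define r where "r = rho phi p1 T q x'"
  have r: "r > 0" using False rho_nn[of x'] by (simp add: r_def)
  have "\<And>x2. ennreal (mu0 phi p1 q x2 * (Tobs phi T q x2 a x' + r) / r) =
     ennreal (1/r) * (ennreal (mu0 phi p1 q x2 * Tobs phi T q x2 a x') + ennreal r * ennreal (mu0 phi p1 q x2))"
  proof -
    fix x2
    have m: "mu0 phi p1 q x2 \<ge> 0" "Tobs phi T q x2 a x' \<ge> 0" by (rule mu_nn, rule Tobs_nn)
    have "mu0 phi p1 q x2 * (Tobs phi T q x2 a x' + r) / r =
        (1/r) * (mu0 phi p1 q x2 * Tobs phi T q x2 a x' + r * mu0 phi p1 q x2)"
      using r by (simp add: field_simps)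
    also have "ennreal \<dots> = ennreal (1/r) * ennreal (mu0 phi p1 q x2 * Tobs phi T q x2 a x' + r * mu0 phi p1 q x2)"
      by (rule ennreal_mult) (use r m in auto)
    also have "ennreal (mu0 phi p1 q x2 * Tobs phi T q x2 a x' + r * mu0 phi p1 q x2) =
       ennreal (mu0 phi p1 q x2 * Tobs phi T q x2 a x') + ennreal r * ennreal (mu0 phi p1 q x2)"
      using r m by (simp add: ennreal_mult)
    finally show "?thesis x2" .
  qed
  hence "(\<Sum>\<^sub>\<infinity>x2. ennreal (mu0 phi p1 q x2 * (Tobs phi T q x2 a x' + r) / r)) =
    ennreal (1/r) * ((\<Sum>\<^sub>\<infinity>x2. ennreal (mu0 phi p1 q x2 * Tobs phi T q x2 a x')) + ennreal r)"
    by (simp add: enn_cmult enn_add mu_enn)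
  also have "(\<Sum>\<^sub>\<infinity>x2. ennreal (mu0 phi p1 q x2 * Tobs phi T q x2 a x')) \<le> (\<Sum>\<^sub>\<infinity>x2. ennreal (G x' x2))"
    unfolding G_def
    by (intro enn_mono ennreal_leI member_le_sum) (auto intro: mult_nonneg_nonneg mu_nn Tobs_nn)
  also have "\<dots> = ennreal (real CARD('a) * r)" by (simp add: rho_enn r_def)
  finally have "(\<Sum>\<^sub>\<infinity>x2. ennreal (mu0 phi p1 q x2 * (Tobs phi T q x2 a x' + r) / r))
      \<le> ennreal (1/r) * (ennreal (real CARD('a) * r) + ennreal r)"
    by (simp add: add_right_mono mult_left_mono)
  also have "\<dots> = ennreal (1/r) * ennreal (real CARD('a) * r + r)"
    using r by simp
  also have "\<dots> = ennreal ((1/r) * (real CARD('a) * r + r))"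
    by (rule ennreal_mult[symmetric]) (use r in auto)
  also have "(1/r) * (real CARD('a) * r + r) = real CARD('a) + 1"
    using r by (simp add: field_simps)
  finally show ?thesis by (simp add: r_def)
qed

end


context bmdp
begin

lemma tv_obs: "ennreal (2 * tv (T (phi x1) a) (T (phi x2) a))
   \<le> (\<Sum>\<^sub>\<infinity>x'. ennreal \<bar>Tobs phi T q x1 a x' - Tobs phi T q x2 a x'\<bar>)"
proof -
  define h where "h s = \<bar>pmf (T (phi x1) a) s - pmf (T (phi x2) a) s\<bar>" for s
  have "2 * tv (T (phi x1) a) (T (phi x2) a) = infsum h UNIV" by (simp add: tv_def h_def[abs_def])
  hence "ennreal (2 * tv (T (phi x1) a) (T (phi x2) a)) \<le> (\<Sum>\<^sub>\<infinity>s. ennreal (h s))"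
    using real_le_enn[of UNIV h] by (simp add: h_def)
  also have "(\<Sum>\<^sub>\<infinity>s. ennreal (h s)) = (\<Sum>\<^sub>\<infinity>s. \<Sum>\<^sub>\<infinity>x'. ennreal (h s) * ennreal (pmf (q s) x'))"
    by (simp add: enn_cmult pmf_enn)
  also have "\<dots> = (\<Sum>\<^sub>\<infinity>x'. \<Sum>\<^sub>\<infinity>s. ennreal (h s) * ennreal (pmf (q s) x'))" by (rule enn_swap)
  also have "\<dots> = (\<Sum>\<^sub>\<infinity>x'. ennreal \<bar>Tobs phi T q x1 a x' - Tobs phi T q x2 a x'\<bar>)"
  proof (rule infsum_cong)
    fix x'
    have "(\<Sum>\<^sub>\<infinity>s. ennreal (h s) * ennreal (pmf (q s) x')) =
       infsum (\<lambda>s. ennreal (h s) * ennreal (pmf (q s) x')) {phi x'}"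
      by (rule infsum_cong_neutral) (auto simp: q_zero)
    also have "\<dots> = ennreal (h (phi x')) * ennreal (pmf (q (phi x')) x')" by simp
    also have "\<dots> = ennreal (h (phi x') * pmf (q (phi x')) x')"
      by (rule ennreal_mult[symmetric]) (auto simp: h_def)
    also have "h (phi x') * pmf (q (phi x')) x' = \<bar>Tobs phi T q x1 a x' - Tobs phi T q x2 a x'\<bar>"
      by (simp add: h_def Tobs_def abs_mult flip: left_diff_distrib)
    finally show "(\<Sum>\<^sub>\<infinity>s. ennreal (h s) * ennreal (pmf (q s) x')) =
       ennreal \<bar>Tobs phi T q x1 a x' - Tobs phi T q x2 a x'\<bar>" .
  qed
  finally show ?thesis .
qed

lemma D_enn: "ennreal (Dist phi p1 T q x a x') = ennreal (1 / (2 * real CARD('a))) *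
   (ennreal (mu0 phi p1 q x) * ennreal (Tobs phi T q x a x') + ennreal (mu0 phi p1 q x) * ennreal (rho phi p1 T q x'))"
proof -
  have m: "mu0 phi p1 q x \<ge> 0" "Tobs phi T q x a x' \<ge> 0" "rho phi p1 T q x' \<ge> 0"
    by (rule mu_nn, rule Tobs_nn, rule rho_nn)
  have "Dist phi p1 T q x a x' = (1 / (2 * real CARD('a))) *
     (mu0 phi p1 q x * Tobs phi T q x a x' + mu0 phi p1 q x * rho phi p1 T q x')"
    by (simp add: Dist_def algebra_simps)
  also have "ennreal \<dots> = ennreal (1 / (2 * real CARD('a))) *
     ennreal (mu0 phi p1 q x * Tobs phi T q x a x' + mu0 phi p1 q x * rho phi p1 T q x')"
    by (rule ennreal_mult) (use m in auto)
  also have "ennreal (mu0 phi p1 q x * Tobs phi T q x a x' + mu0 phi p1 q x * rho phi p1 T q x') =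
     ennreal (mu0 phi p1 q x) * ennreal (Tobs phi T q x a x') + ennreal (mu0 phi p1 q x) * ennreal (rho phi p1 T q x')"
    using m by (simp add: ennreal_mult)
  finally show ?thesis .
qed

lemma D_sum: "(\<Sum>\<^sub>\<infinity>(x, a, x')\<in>UNIV. ennreal (Dist phi p1 T q x a x')) = 1"
proof -
  define c where "c = ennreal (1 / (2 * real CARD('a)))"
  have c: "c < top" by (simp add: c_def)
  have K: "c * (of_nat CARD('a) * 2) = 1"
  proof -
    have "(of_nat CARD('a) * 2 :: ennreal) = ennreal (2 * real CARD('a))"
      by (simp add: ennreal_of_nat_eq_real_of_nat ennreal_mult'' mult.commute)
    hence "c * (of_nat CARD('a) * 2) = ennreal (1 / (2 * real CARD('a))) * ennreal (2 * real CARD('a))"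
      by (simp add: c_def)
    also have "\<dots> = ennreal ((1 / (2 * real CARD('a))) * (2 * real CARD('a)))"
      by (rule ennreal_mult[symmetric]) auto
    also have "\<dots> = 1" by simp
    finally show ?thesis .
  qed
  have inner: "(\<Sum>\<^sub>\<infinity>x'. ennreal (Dist phi p1 T q x a x')) = c * (2 * ennreal (mu0 phi p1 q x))" for x a
  proof -
    have "(\<Sum>\<^sub>\<infinity>x'. ennreal (Dist phi p1 T q x a x')) =
       c * ((\<Sum>\<^sub>\<infinity>x'. ennreal (mu0 phi p1 q x) * ennreal (Tobs phi T q x a x')) +
            (\<Sum>\<^sub>\<infinity>x'. ennreal (mu0 phi p1 q x) * ennreal (rho phi p1 T q x')))"
      unfolding D_enn c_def[symmetric] by (simp add: enn_cmult[OF c] enn_add)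
    also have "\<dots> = c * (2 * ennreal (mu0 phi p1 q x))"
      by (simp add: enn_cmult Tobs_enn rho_sum mult_2)
    finally show ?thesis .
  qed
  have "(\<Sum>\<^sub>\<infinity>(x, a, x')\<in>UNIV. ennreal (Dist phi p1 T q x a x')) =
     (\<Sum>\<^sub>\<infinity>x. \<Sum>a\<in>UNIV. \<Sum>\<^sub>\<infinity>x'. ennreal (Dist phi p1 T q x a x'))"
    by (subst enn_triple) simp
  also have "\<dots> = (\<Sum>\<^sub>\<infinity>x. (c * (of_nat CARD('a) * 2)) * ennreal (mu0 phi p1 q x))"
    by (simp add: inner mult_ac)
  also have "\<dots> = 1" by (simp add: K mu_enn)
  finally show ?thesis .
qed

end


lemma gstar_01: "t \<ge> 0 \<Longrightarrow> r \<ge> 0 \<Longrightarrow> 0 \<le> t / (t + r) \<and> t / (t + r) \<le> (1::real)"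
  by (cases "t + r = 0") (auto simp: divide_le_eq_1)

theorem lemma10:
  fixes phi :: "'x::countable \<Rightarrow> 's"
    and q :: "'s \<Rightarrow> 'x pmf"
    and T :: "'s \<Rightarrow> 'a::finite \<Rightarrow> 's pmf"
    and p1 :: "'s pmf"
    and S1 :: "'s set"
    and N :: nat
    and Gamma Delta :: real
    and phihat :: "'x \<Rightarrow> nat"
    and ghat :: "nat \<Rightarrow> 'a \<Rightarrow> 'x \<Rightarrow> real"
  assumes decoder: "\<And>s x. x \<in> set_pmf (q s) \<Longrightarrow> phi x = s"
    and S1_fin: "finite S1" and N_def: "N = card S1"
    and init: "set_pmf p1 \<subseteq> S1"
    and Gamma_pos: "Gamma > 0"
    and margin: "\<And>s s' a. s \<in> S1 \<Longrightarrow> s' \<in> S1 \<Longrightarrow> s \<noteq> s' \<Longrightarrow> tv (T s a) (T s' a) \<ge> Gamma"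
    and phihat_range: "\<And>x. phihat x \<in> {1..N}"
    and ghat_range: "\<And>i a x'. ghat i a x' \<in> {0..1}"
    and err: "(\<Sum>\<^sub>\<infinity>(x, a, x') \<in> UNIV. Dist phi p1 T q x a x' *
                 \<bar>ghat (phihat x) a x' - gstar phi p1 T q x a x'\<bar>) \<le> Delta"
  shows "(\<Sum>\<^sub>\<infinity>(x1, x2) \<in> UNIV. if phi x1 \<noteq> phi x2 \<and> phihat x1 = phihat x2
            then mu0 phi p1 q x1 * mu0 phi p1 q x2 else 0)
         \<le> 8 * real (card (UNIV :: 'a set)) ^ 2 * Delta / Gamma"
proof -
  interpret bmdp phi q T p1 by unfold_locales (rule decoder)
  define A where "A = real CARD('a)"
  have A: "A \<ge> 1" by (simp add: A_def)
  define mu where "mu = mu0 phi p1 q"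
  define Tb where "Tb = Tobs phi T q"
  define r where "r = rho phi p1 T q"
  define e where "e x a x' = \<bar>ghat (phihat x) a x' - gstar phi p1 T q x a x'\<bar>" for x a x'
  define W where "W x a x' = mu x * (Tb x a x' + r x')" for x a x'
  define c where "c x a x' = W x a x' / r x'" for x a x'
  define F where "F x1 x2 = (\<Sum>a\<in>UNIV. \<Sum>\<^sub>\<infinity>x'. ennreal (W x1 a x' * e x1 a x') * ennreal (c x2 a x'))" for x1 x2
  define Ef where "Ef = (\<lambda>(x, a, x'). Dist phi p1 T q x a x' *
                 \<bar>ghat (phihat x) a x' - gstar phi p1 T q x a x'\<bar>)"
  have mu_nn': "mu x \<ge> 0" for x by (simp add: mu_def mu_nn)
  have Tb_nn': "Tb x a x' \<ge> 0" for x a x' by (simp add: Tb_def Tobs_nn)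
  have r_nn': "r x' \<ge> 0" for x' by (simp add: r_def rho_nn)
  have W_nn: "W x a x' \<ge> 0" for x a x' by (simp add: W_def mu_nn' Tb_nn' r_nn')
  have e_nn: "e x a x' \<ge> 0" for x a x' by (simp add: e_def)
  have e_le1: "e x a x' \<le> 1" for x a x'
  proof -
    have "ghat (phihat x) a x' \<in> {0..1}" by (rule ghat_range)
    moreover have "0 \<le> gstar phi p1 T q x a x' \<and> gstar phi p1 T q x a x' \<le> 1"
      unfolding gstar_def by (rule gstar_01) (simp_all add: Tobs_nn rho_nn)
    ultimately show ?thesis by (auto simp: e_def)
  qed
  have D_nn: "Dist phi p1 T q x a x' \<ge> 0" for x a x'
    by (simp add: Dist_def mu_nn Tobs_nn rho_nn)
  have Ef_nn: "Ef p \<ge> 0" for p by (auto simp: Ef_def D_nn split: prod.splits)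
  have Ef_le: "Ef p \<le> (\<lambda>(x, a, x'). Dist phi p1 T q x a x') p" for p
    using e_le1 D_nn by (auto simp: Ef_def e_def split: prod.splits intro: mult_left_le)
  have Ef_enn_le: "(\<Sum>\<^sub>\<infinity>p. ennreal (Ef p)) \<le> 1"
  proof -
    have "(\<Sum>\<^sub>\<infinity>p. ennreal (Ef p)) \<le> (\<Sum>\<^sub>\<infinity>(x, a, x')\<in>UNIV. ennreal (Dist phi p1 T q x a x'))"
      by (rule enn_mono) (use Ef_le in \<open>auto intro: ennreal_leI split: prod.splits\<close>)
    thus ?thesis by (simp add: D_sum)
  qed
  have Ef_summable: "Ef summable_on UNIV"
    by (rule enn_fin_summable) (use Ef_nn Ef_enn_le in \<open>auto simp: top.not_eq_extremum order_le_less_trans\<close>)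
  have Ef_enn: "ennreal (infsum Ef UNIV) = (\<Sum>\<^sub>\<infinity>p. ennreal (Ef p))"
    by (rule real_enn) (use Ef_nn Ef_summable in auto)
  have err': "infsum Ef UNIV \<le> Delta" using err by (simp add: Ef_def)
  have Delta_nn: "Delta \<ge> 0" using err' infsum_nonneg[of UNIV Ef] Ef_nn by force
  have Ef_enn_Delta: "(\<Sum>\<^sub>\<infinity>p. ennreal (Ef p)) \<le> ennreal Delta"
    using Ef_enn err' by (metis ennreal_leI)
  have point: "ennreal (2 * Gamma * A * (if phi x1 \<noteq> phi x2 \<and> phihat x1 = phihat x2 then mu x1 * mu x2 else 0))
      \<le> F x1 x2 + F x2 x1" for x1 x2
  proof (cases "phi x1 \<noteq> phi x2 \<and> phihat x1 = phihat x2 \<and> mu x1 * mu x2 \<noteq> 0")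
    case False
    hence "2 * Gamma * A * (if phi x1 \<noteq> phi x2 \<and> phihat x1 = phihat x2 then mu x1 * mu x2 else 0) = 0"
      by auto
    show ?thesis unfolding \<open>2 * Gamma * A * _ = 0\<close> by simp
  next
    case True
    hence bad: "phi x1 \<noteq> phi x2" "phihat x1 = phihat x2" by auto
    have pos: "mu x1 \<noteq> 0" "mu x2 \<noteq> 0" using True by auto
    have inS: "phi x \<in> S1" if "mu x \<noteq> 0" for x
    proof -
      have "pmf p1 (phi x) \<noteq> 0" using that by (auto simp: mu_def mu0_def)
      hence "phi x \<in> set_pmf p1" by (simp add: set_pmf_iff)
      thus ?thesis using init by auto
    qed
    have mm: "mu x1 * mu x2 \<ge> 0" using mu_nn' by simp
    have per_a: "ennreal (2 * Gamma * (mu x1 * mu x2)) \<le>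
       (\<Sum>\<^sub>\<infinity>x'. ennreal (W x1 a x' * e x1 a x') * ennreal (c x2 a x')) +
       (\<Sum>\<^sub>\<infinity>x'. ennreal (W x2 a x' * e x2 a x') * ennreal (c x1 a x'))" for a
    proof -
      have "Gamma \<le> tv (T (phi x1) a) (T (phi x2) a)"
        by (rule margin) (use inS pos bad in auto)
      hence "ennreal (2 * Gamma) \<le> ennreal (2 * tv (T (phi x1) a) (T (phi x2) a))"
        by (intro ennreal_leI) simp
      also have "\<dots> \<le> (\<Sum>\<^sub>\<infinity>x'. ennreal \<bar>Tb x1 a x' - Tb x2 a x'\<bar>)"
        unfolding Tb_def by (rule tv_obs)
      finally have "ennreal (mu x1 * mu x2) * ennreal (2 * Gamma) \<le>
          ennreal (mu x1 * mu x2) * (\<Sum>\<^sub>\<infinity>x'. ennreal \<bar>Tb x1 a x' - Tb x2 a x'\<bar>)"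
        by (rule mult_left_mono) simp
      also have "\<dots> = (\<Sum>\<^sub>\<infinity>x'. ennreal (mu x1 * mu x2) * ennreal \<bar>Tb x1 a x' - Tb x2 a x'\<bar>)"
        by (simp add: enn_cmult)
      also have "\<dots> = (\<Sum>\<^sub>\<infinity>x'. ennreal (mu x1 * mu x2 * \<bar>Tb x1 a x' - Tb x2 a x'\<bar>))"
        by (rule infsum_cong) (rule ennreal_mult[symmetric], use mm in auto)
      also have "\<dots> \<le> (\<Sum>\<^sub>\<infinity>x'. ennreal (W x1 a x' * e x1 a x') * ennreal (c x2 a x') +
                          ennreal (W x2 a x' * e x2 a x') * ennreal (c x1 a x'))"
      proof (rule enn_mono)
        fix x'
        have k: "mu x1 * mu x2 * \<bar>Tb x1 a x' - Tb x2 a x'\<bar> \<le>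
            W x1 a x' * e x1 a x' * c x2 a x' + W x2 a x' * e x2 a x' * c x1 a x'"
          unfolding W_def e_def c_def gstar_def bad(2) Tb_def[symmetric] r_def[symmetric]
          by (rule key_real[where A=A]) (use mu_nn' Tb_nn' r_nn' in \<open>auto simp: mu_def Tb_def r_def A_def intro: rho_low\<close>)
        have nn: "W x1 a x' * e x1 a x' \<ge> 0" "c x2 a x' \<ge> 0" "W x2 a x' * e x2 a x' \<ge> 0" "c x1 a x' \<ge> 0"
          using W_nn e_nn r_nn' by (auto simp: c_def)
        have "ennreal (mu x1 * mu x2 * \<bar>Tb x1 a x' - Tb x2 a x'\<bar>) \<le>
            ennreal (W x1 a x' * e x1 a x' * c x2 a x' + W x2 a x' * e x2 a x' * c x1 a x')"
          by (rule ennreal_leI[OF k])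
        also have "\<dots> = ennreal (W x1 a x' * e x1 a x') * ennreal (c x2 a x') +
                          ennreal (W x2 a x' * e x2 a x') * ennreal (c x1 a x')"
          using nn by (simp add: ennreal_mult)
        finally show "ennreal (mu x1 * mu x2 * \<bar>Tb x1 a x' - Tb x2 a x'\<bar>) \<le>
            ennreal (W x1 a x' * e x1 a x') * ennreal (c x2 a x') +
                          ennreal (W x2 a x' * e x2 a x') * ennreal (c x1 a x')" .
      qed
      also have "\<dots> = (\<Sum>\<^sub>\<infinity>x'. ennreal (W x1 a x' * e x1 a x') * ennreal (c x2 a x')) +
       (\<Sum>\<^sub>\<infinity>x'. ennreal (W x2 a x' * e x2 a x') * ennreal (c x1 a x'))"
        by (rule enn_add)
      finally have fin: "ennreal (mu x1 * mu x2) * ennreal (2 * Gamma) \<le>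
       (\<Sum>\<^sub>\<infinity>x'. ennreal (W x1 a x' * e x1 a x') * ennreal (c x2 a x')) +
       (\<Sum>\<^sub>\<infinity>x'. ennreal (W x2 a x' * e x2 a x') * ennreal (c x1 a x'))" .
      have eqq: "ennreal (2 * Gamma * (mu x1 * mu x2)) = ennreal (mu x1 * mu x2) * ennreal (2 * Gamma)"
        using ennreal_mult[of "mu x1 * mu x2" "2 * Gamma"] mm Gamma_pos by (simp add: mult.commute)
      show ?thesis unfolding eqq by (rule fin)
    qed
    have "ennreal (2 * Gamma * A * (if phi x1 \<noteq> phi x2 \<and> phihat x1 = phihat x2 then mu x1 * mu x2 else 0))
        = (\<Sum>a\<in>(UNIV::'a set). ennreal (2 * Gamma * (mu x1 * mu x2)))"
    proof -
      have "2 * Gamma * A * (if phi x1 \<noteq> phi x2 \<and> phihat x1 = phihat x2 then mu x1 * mu x2 else 0)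
          = A * (2 * Gamma * (mu x1 * mu x2))" using bad by simp
      also have "ennreal \<dots> = ennreal A * ennreal (2 * Gamma * (mu x1 * mu x2))"
        by (rule ennreal_mult) (use A mm Gamma_pos in auto)
      also have "\<dots> = (\<Sum>a\<in>(UNIV::'a set). ennreal (2 * Gamma * (mu x1 * mu x2)))"
        by (simp add: A_def ennreal_of_nat_eq_real_of_nat)
      finally show ?thesis .
    qed
    also have "\<dots> \<le> (\<Sum>a\<in>UNIV. (\<Sum>\<^sub>\<infinity>x'. ennreal (W x1 a x' * e x1 a x') * ennreal (c x2 a x')) +
       (\<Sum>\<^sub>\<infinity>x'. ennreal (W x2 a x' * e x2 a x') * ennreal (c x1 a x')))"
      by (rule sum_mono) (rule per_a)
    also have "\<dots> = F x1 x2 + F x2 x1" by (simp add: F_def sum.distrib)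
    finally show ?thesis .
  qed
  have WeE: "ennreal (W x a x' * e x a x') = ennreal (2 * A) * ennreal (Ef (x, a, x'))" for x a x'
  proof -
    have "W x a x' * e x a x' = (2 * A) * Ef (x, a, x')"
      using A by (simp add: W_def Ef_def Dist_def e_def mu_def Tb_def r_def A_def)
    thus ?thesis using ennreal_mult[of "2 * A" "Ef (x, a, x')"] A Ef_nn[of "(x, a, x')"] by simp
  qed
  have Fbound: "(\<Sum>\<^sub>\<infinity>x1. \<Sum>\<^sub>\<infinity>x2. F x1 x2) \<le> ennreal ((A + 1) * (2 * A * Delta))"
  proof -
    have inner: "(\<Sum>\<^sub>\<infinity>x2. F x1 x2) \<le> ennreal (A + 1) * (\<Sum>a\<in>UNIV. \<Sum>\<^sub>\<infinity>x'. ennreal (W x1 a x' * e x1 a x'))" for x1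
    proof -
      have "(\<Sum>\<^sub>\<infinity>x2. F x1 x2) = (\<Sum>a\<in>UNIV. \<Sum>\<^sub>\<infinity>x2. \<Sum>\<^sub>\<infinity>x'. ennreal (W x1 a x' * e x1 a x') * ennreal (c x2 a x'))"
        unfolding F_def by (rule enn_sum) simp
      also have "\<dots> = (\<Sum>a\<in>UNIV. \<Sum>\<^sub>\<infinity>x'. \<Sum>\<^sub>\<infinity>x2. ennreal (W x1 a x' * e x1 a x') * ennreal (c x2 a x'))"
        by (intro sum.cong refl enn_swap)
      also have "\<dots> = (\<Sum>a\<in>UNIV. \<Sum>\<^sub>\<infinity>x'. ennreal (W x1 a x' * e x1 a x') * (\<Sum>\<^sub>\<infinity>x2. ennreal (c x2 a x')))"
        by (simp add: enn_cmult)
      also have "\<dots> \<le> (\<Sum>a\<in>UNIV. \<Sum>\<^sub>\<infinity>x'. ennreal (W x1 a x' * e x1 a x') * ennreal (A + 1))"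
      proof (intro sum_mono enn_mono mult_left_mono)
        fix a x'
        show "(\<Sum>\<^sub>\<infinity>x2. ennreal (c x2 a x')) \<le> ennreal (A + 1)"
          using c_sum[of a x'] by (simp add: c_def W_def mu_def Tb_def r_def A_def)
      qed simp
      also have "\<dots> = ennreal (A + 1) * (\<Sum>a\<in>UNIV. \<Sum>\<^sub>\<infinity>x'. ennreal (W x1 a x' * e x1 a x'))"
        by (simp add: enn_cmult sum_distrib_left mult.commute)
      finally show ?thesis .
    qed
    have "(\<Sum>\<^sub>\<infinity>x1. \<Sum>\<^sub>\<infinity>x2. F x1 x2) \<le>
        (\<Sum>\<^sub>\<infinity>x1. ennreal (A + 1) * (\<Sum>a\<in>UNIV. \<Sum>\<^sub>\<infinity>x'. ennreal (W x1 a x' * e x1 a x')))"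
      by (rule enn_mono) (rule inner)
    also have "\<dots> = ennreal (A + 1) * (\<Sum>\<^sub>\<infinity>x1. \<Sum>a\<in>UNIV. \<Sum>\<^sub>\<infinity>x'. ennreal (W x1 a x' * e x1 a x'))"
      by (simp add: enn_cmult)
    also have "(\<Sum>\<^sub>\<infinity>x1. \<Sum>a\<in>UNIV. \<Sum>\<^sub>\<infinity>x'. ennreal (W x1 a x' * e x1 a x')) =
        (\<Sum>\<^sub>\<infinity>p. ennreal (2 * A) * ennreal (Ef p))"
      by (subst enn_triple) (simp add: WeE)
    also have "\<dots> = ennreal (2 * A) * (\<Sum>\<^sub>\<infinity>p. ennreal (Ef p))"
      by (simp add: enn_cmult)
    also have "\<dots> \<le> ennreal (2 * A) * ennreal Delta"
      by (rule mult_left_mono[OF Ef_enn_Delta]) simp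
    finally have "(\<Sum>\<^sub>\<infinity>x1. \<Sum>\<^sub>\<infinity>x2. F x1 x2) \<le> ennreal (A + 1) * (ennreal (2 * A) * ennreal Delta)"
      by (simp add: mult_left_mono)
    also have "\<dots> = ennreal ((A + 1) * (2 * A * Delta))"
      using A Delta_nn by (simp add: ennreal_mult)
    finally show ?thesis .
  qed
  have Fbound2: "(\<Sum>\<^sub>\<infinity>x1. \<Sum>\<^sub>\<infinity>x2. F x2 x1) \<le> ennreal ((A + 1) * (2 * A * Delta))"
    using Fbound by (subst enn_swap)
  define Bf where "Bf = (\<lambda>(x1, x2). if phi x1 \<noteq> phi x2 \<and> phihat x1 = phihat x2
            then mu0 phi p1 q x1 * mu0 phi p1 q x2 else 0)"
  have Bf_nn: "Bf p \<ge> 0" for p by (auto simp: Bf_def mu_nn split: prod.splits)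
  define L where "L = infsum Bf UNIV"
  have L_nn: "L \<ge> 0" unfolding L_def by (rule infsum_nonneg) (rule Bf_nn)
  have GA: "2 * Gamma * A \<ge> 0" using Gamma_pos A by simp
  have "ennreal (2 * Gamma * A * L) = ennreal (2 * Gamma * A) * ennreal L"
    by (rule ennreal_mult) (use GA L_nn in auto)
  also have "\<dots> \<le> ennreal (2 * Gamma * A) * (\<Sum>\<^sub>\<infinity>p. ennreal (Bf p))"
    unfolding L_def by (rule mult_left_mono) (use real_le_enn[of UNIV Bf] Bf_nn in auto)
  also have "\<dots> = (\<Sum>\<^sub>\<infinity>p. ennreal (2 * Gamma * A) * ennreal (Bf p))"
    by (simp add: enn_cmult)
  also have "\<dots> = (\<Sum>\<^sub>\<infinity>p\<in>UNIV \<times> UNIV. ennreal (2 * Gamma * A * Bf p))"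
    by (simp add: ennreal_mult GA Bf_nn)
  also have "\<dots> = (\<Sum>\<^sub>\<infinity>x1. \<Sum>\<^sub>\<infinity>x2. ennreal (2 * Gamma * A * Bf (x1, x2)))"
    by (rule enn_Sigma)
  also have "\<dots> \<le> (\<Sum>\<^sub>\<infinity>x1. \<Sum>\<^sub>\<infinity>x2. F x1 x2 + F x2 x1)"
  proof (intro enn_mono)
    fix x1 x2
    show "ennreal (2 * Gamma * A * Bf (x1, x2)) \<le> F x1 x2 + F x2 x1"
      using point[of x1 x2] unfolding Bf_def mu_def by simp
  qed
  also have "\<dots> = (\<Sum>\<^sub>\<infinity>x1. \<Sum>\<^sub>\<infinity>x2. F x1 x2) + (\<Sum>\<^sub>\<infinity>x1. \<Sum>\<^sub>\<infinity>x2. F x2 x1)"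
    by (simp add: enn_add)
  also have "\<dots> \<le> ennreal ((A + 1) * (2 * A * Delta)) + ennreal ((A + 1) * (2 * A * Delta))"
    by (rule add_mono[OF Fbound Fbound2])
  also have "\<dots> = ennreal (2 * ((A + 1) * (2 * A * Delta)))"
  proof -
    have X_nn: "(A + 1) * (2 * A * Delta) \<ge> 0" using A Delta_nn by simp
    have e2: "2 * ((A + 1) * (2 * A * Delta)) = (A + 1) * (2 * A * Delta) + (A + 1) * (2 * A * Delta)"
      by simp
    show ?thesis unfolding e2 by (rule ennreal_plus[OF X_nn X_nn, symmetric])
  qed
  finally have "2 * Gamma * A * L \<le> 2 * ((A + 1) * (2 * A * Delta))"
    using A Delta_nn by (subst (asm) ennreal_le_iff) auto
  hence "A * (Gamma * L) \<le> A * ((A + 1) * (2 * Delta))" by (simp add: algebra_simps)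
  hence "Gamma * L \<le> (A + 1) * (2 * Delta)" using A by simp
  also have "\<dots> \<le> 8 * A ^ 2 * Delta"
  proof -
    have "A * 1 \<le> A * A" by (rule mult_left_mono) (use A in auto)
    hence "A \<le> A * A" by simp
    hence "2 * A + 2 \<le> 8 * (A * A)" using A by linarith
    hence "(A + 1) * 2 \<le> 8 * A ^ 2" unfolding power2_eq_square by (simp add: algebra_simps)
    thus ?thesis using Delta_nn by (metis mult.assoc mult_right_mono)
  qed
  finally have "L \<le> 8 * A ^ 2 * Delta / Gamma"
    using Gamma_pos by (simp add: pos_le_divide_eq mult.commute)
  thus ?thesis by (simp add: L_def Bf_def A_def)
qed


end
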